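(* Let $n>0$ be the total computational load and let $p_0,\dots,p_{k-1}$ be $k$ processing units (PUs), each with a speed $c_s(p_i)>0$ and a memory capacity $m_{cap}(p_i)>0$. Run the following greedy procedure. First sort the PUs so that $c_s(p_0)/m_{cap}(p_0)\ge c_s(p_1)/m_{cap}(p_1)\ge\dots\ge c_s(p_{k-1})/m_{cap}(p_{k-1})$. Initialize $\mathrm{jLoad}\gets n$ and $\mathrm{jSpeed}\gets C_s=\sum_{i=0}^{k-1}c_s(p_i)$. Then for $i=0,1,\dots,k-1$ in order: - compute $\mathrm{desW}(b_i)=c_s(p_i)\cdot \mathrm{jLoad}/\mathrm{jSpeed}$; - if $\mathrm{desW}(b_i)>m_{cap}(p_i)$, set $tw(b_i)\gets m_{cap}(p_i)$ and call $p_i$ saturated; otherwise set $tw(b_i)\gets \mathrm{desW}(b_i)$ and call $p_i$ non-saturated; - update $\mathrm{jLoad}\gets\mathrm{jLoad}-tw(b_i)$ and $\mathrm{jSpeed}\gets\mathrm{jSpeed}-c_s(p_i)$. Then no saturated PU appears after a non-saturated PU in the sorted sequence. That is, if $p_i$ is non-saturated, then every $p_j$ with $j>i$ is also non-saturated.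
   Context: This procedure computes target block weights $tw(b_i)$ for distributing an application graph with $n$ unit-weight vertices over heterogeneous PUs. Block $b_i$ is assigned to PU $p_i$. *)

theory Defs
  imports Complex_Main
begin

text \<open>Greedy target-weight procedure. PUs are indexed 0..k-1 (already sorted).
  cs i = speed, mcap i = memory capacity, n = total load.
  tw_state cs mcap n k i = (jLoad, jSpeed) before iteration i.\<close>

definition desW :: "(nat \<Rightarrow> real) \<Rightarrow> real \<Rightarrow> real \<Rightarrow> nat \<Rightarrow> real" where
  "desW cs jLoad jSpeed i = cs i * jLoad / jSpeed"

definition tw_step :: "(nat \<Rightarrow> real) \<Rightarrow> (nat \<Rightarrow> real) \<Rightarrow> real \<Rightarrow> real \<Rightarrow> nat \<Rightarrow> real" where
  "tw_step cs mcap jLoad jSpeed i =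
     (if desW cs jLoad jSpeed i > mcap i then mcap i else desW cs jLoad jSpeed i)"

fun tw_state :: "(nat \<Rightarrow> real) \<Rightarrow> (nat \<Rightarrow> real) \<Rightarrow> real \<Rightarrow> nat \<Rightarrow> nat \<Rightarrow> real \<times> real" where
  "tw_state cs mcap n k 0 = (n, (\<Sum>i<k. cs i))"
| "tw_state cs mcap n k (Suc i) =
     (let (jLoad, jSpeed) = tw_state cs mcap n k i
      in (jLoad - tw_step cs mcap jLoad jSpeed i, jSpeed - cs i))"

definition saturated :: "(nat \<Rightarrow> real) \<Rightarrow> (nat \<Rightarrow> real) \<Rightarrow> real \<Rightarrow> nat \<Rightarrow> nat \<Rightarrow> bool" where
  "saturated cs mcap n k i =
     (let (jLoad, jSpeed) = tw_state cs mcap n k i in desW cs jLoad jSpeed i > mcap i)"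

end

theory Submission
  imports Defs
begin

lemma speed_eq:
  "t \<le> k \<Longrightarrow> snd (tw_state cs mcap n k t) = (\<Sum>l\<in>{t..<k}. cs l)"
proof (induction t)
  case 0
  then show ?case by (simp add: lessThan_atLeast0)
next
  case (Suc t)
  then have "snd (tw_state cs mcap n k t) = (\<Sum>l\<in>{t..<k}. cs l)" by simp
  moreover have "(\<Sum>l\<in>{t..<k}. cs l) = cs t + (\<Sum>l\<in>{Suc t..<k}. cs l)"
    using Suc.prems by (simp add: sum.atLeast_Suc_lessThan)
  ultimately show ?case by (simp add: case_prod_beta Let_def)
qed

lemma step:
  fixes cs mcap :: "nat \<Rightarrow> real"
  assumes cs: "\<And>i. i < k \<Longrightarrow> cs i > 0"
    and mc: "\<And>i. i < k \<Longrightarrow> mcap i > 0"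
    and ord: "\<And>i j. i \<le> j \<Longrightarrow> j < k \<Longrightarrow> cs j / mcap j \<le> cs i / mcap i"
    and t: "Suc t < k"
    and ns: "\<not> saturated cs mcap n k t"
  shows "\<not> saturated cs mcap n k (Suc t)"
proof -
  obtain L S where st: "tw_state cs mcap n k t = (L, S)" by fastforce
  have S: "S = (\<Sum>l\<in>{t..<k}. cs l)" using speed_eq[of t k cs mcap n] st t by simp
  have S1: "S - cs t = (\<Sum>l\<in>{Suc t..<k}. cs l)"
    using t by (simp add: S sum.atLeast_Suc_lessThan)
  have pos1: "S - cs t > 0" unfolding S1
    using t cs by (intro sum_pos) auto
  have cst: "cs t > 0" "cs (Suc t) > 0" "mcap t > 0" "mcap (Suc t) > 0"
    using cs mc t by auto
  have ns': "cs t * L / S \<le> mcap t" using ns st unfolding saturated_def desW_def by simp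
  have st1: "tw_state cs mcap n k (Suc t) = (L - cs t * L / S, S - cs t)"
    using ns' st by (simp add: tw_step_def desW_def)
  have Spos: "S > 0" using pos1 cst by linarith
  have "L - cs t * L / S = L / S * (S - cs t)" using Spos by (simp add: field_simps)
  hence r: "(L - cs t * L / S) / (S - cs t) = L / S" using pos1 by simp
  have r1: "L / S \<le> mcap t / cs t" using ns' cst by (simp add: field_simps)
  have o: "cs (Suc t) / mcap (Suc t) \<le> cs t / mcap t" using ord[of t "Suc t"] t by simp
  hence o': "cs (Suc t) * mcap t \<le> cs t * mcap (Suc t)" using cst by (simp add: field_simps)
  have "cs (Suc t) * (L / S) \<le> cs (Suc t) * (mcap t / cs t)"
    using mult_left_mono[OF r1, of "cs (Suc t)"] cst(2) by linarith
  also have "\<dots> \<le> mcap (Suc t)" using o' cst by (simp add: field_simps)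
  finally have "cs (Suc t) * (L / S) \<le> mcap (Suc t)" .
  then have "cs (Suc t) * (L - cs t * L / S) / (S - cs t) \<le> mcap (Suc t)"
    using r by (metis times_divide_eq_right)
  then show ?thesis unfolding saturated_def desW_def st1 by simp
qed

theorem lemma1:
  fixes cs mcap :: "nat \<Rightarrow> real" and n :: nat and k :: nat
  assumes "n > 0"
    and "\<And>i. i < k \<Longrightarrow> cs i > 0"
    and "\<And>i. i < k \<Longrightarrow> mcap i > 0"
    and "\<And>i j. i \<le> j \<Longrightarrow> j < k \<Longrightarrow> cs j / mcap j \<le> cs i / mcap i"
    and "i < j" and "j < k"
    and "\<not> saturated cs mcap (real n) k i"
  shows "\<not> saturated cs mcap (real n) k j"
proof -
  have "\<forall>j. i \<le> j \<longrightarrow> j < k \<longrightarrow> \<not> saturated cs mcap (real n) k j"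
  proof (intro allI impI)
    fix j assume "i \<le> j" "j < k"
    then show "\<not> saturated cs mcap (real n) k j"
    proof (induction j rule: dec_induct)
      case base then show ?case using assms(7) by simp
    next
      case (step m)
      then show ?case using Submission.step[OF assms(2,3,4)] by simp
    qed
  qed
  then show ?thesis using assms(5,6) by simp
qed

end
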